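(* Let $n\geq 1$ and let $M$ be a complex $n\times n$ matrix. Then $M$ is a complex Hadamard matrix if and only if every entry of $M$ has complex norm $1$ and every eigenvalue of $M$ has complex norm $\sqrt{n}$.
   Context: A complex Hadamard matrix of order $n$ is an $n\times n$ complex matrix $M$ all of whose entries have complex norm $1$ and which satisfies $MM^{\ast}=nI_n$, where $M^\ast$ is the conjugate transpose of $M$ and $I_n$ the identity matrix. *)

theory Defs
  imports "Jordan_Normal_Form.Char_Poly"
begin

definition conj_transpose :: "complex mat \<Rightarrow> complex mat" where
  "conj_transpose M = mat (dim_col M) (dim_row M) (\<lambda>(i,j). cnj (M $$ (j,i)))"

definition complex_hadamard :: "nat \<Rightarrow> complex mat \<Rightarrow> bool" where
  "complex_hadamard n M \<longleftrightarrow> M \<in> carrier_mat n n \<and>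
     (\<forall>i<n. \<forall>j<n. cmod (M $$ (i,j)) = 1) \<and>
     M * conj_transpose M = of_nat n \<cdot>\<^sub>m 1\<^sub>m n"

end

theory Submission
  imports Defs "Jordan_Normal_Form.Schur_Decomposition"
begin


lemma amgm_eq:
  fixes r :: "nat \<Rightarrow> real" and c :: real
  assumes c: "c > 0" and nn: "\<And>i. i < n \<Longrightarrow> r i \<ge> 0"
    and s: "(\<Sum>i<n. r i) = real n * c" and p: "(\<Prod>i<n. r i) = c ^ n"
  shows "\<And>i. i < n \<Longrightarrow> r i = c"
proof -
  have pos: "r i > 0" if "i < n" for i
  proof -
    have "(\<Prod>i<n. r i) \<noteq> 0" using p c by simp
    hence "r i \<noteq> 0" using that by (simp add: prod_zero_iff)
    thus ?thesis using nn[OF that] by simp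
  qed
  define y where "y i = r i / c" for i
  have ypos: "y i > 0" if "i < n" for i using pos[OF that] c by (simp add: y_def)
  have "(\<Prod>i<n. y i) = (\<Prod>i<n. r i) / c ^ n"
    by (simp add: y_def prod_dividef)
  hence py: "(\<Prod>i<n. y i) = 1" using p c by simp
  have "(\<Sum>i<n. ln (y i)) = ln (\<Prod>i<n. y i)"
    by (rule ln_prod[symmetric]) (use ypos in force)+
  hence sl: "(\<Sum>i<n. ln (y i)) = 0" using py by simp
  have "(\<Sum>i<n. y i) = (\<Sum>i<n. r i) / c" by (simp add: y_def sum_divide_distrib)
  hence sy: "(\<Sum>i<n. y i) = real n" using s c by simp
  have "(\<Sum>i<n. y i - 1 - ln (y i)) = (\<Sum>i<n. y i) - real n - (\<Sum>i<n. ln (y i))"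
    by (simp add: sum_subtractf)
  hence z: "(\<Sum>i<n. y i - 1 - ln (y i)) = 0" using sl sy by simp
  have nn2: "\<forall>i\<in>{..<n}. y i - 1 - ln (y i) \<ge> 0"
    using ypos ln_le_minus_one by fastforce
  fix i assume i: "i < n"
  have "y i - 1 - ln (y i) = 0"
    using sum_nonneg_eq_0_iff[of "{..<n}" "\<lambda>i. y i - 1 - ln (y i)"] z nn2 i by auto
  hence "y i = 1" using ln_eq_minus_one[OF ypos[OF i]] by simp
  thus "r i = c" using c by (simp add: y_def)
qed



definition mtr :: "'a::comm_ring_1 mat \<Rightarrow> 'a" where
  "mtr A = (\<Sum>i<dim_row A. A $$ (i,i))"

lemma ct_carrier[simp]: "M \<in> carrier_mat n m \<Longrightarrow> conj_transpose M \<in> carrier_mat m n"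
  by (auto simp: conj_transpose_def)

lemma ct_index[simp]: "i < dim_col M \<Longrightarrow> j < dim_row M \<Longrightarrow> conj_transpose M $$ (i,j) = cnj (M $$ (j,i))"
  by (auto simp: conj_transpose_def)

lemma ct_dims[simp]: "dim_row (conj_transpose M) = dim_col M" "dim_col (conj_transpose M) = dim_row M"
  by (auto simp: conj_transpose_def)

lemma adj_sprod:
  assumes M: "M \<in> carrier_mat n m" and x: "x \<in> carrier_vec m" and w: "w \<in> carrier_vec n"
  shows "(M *\<^sub>v x) \<bullet>c w = x \<bullet>c (conj_transpose M *\<^sub>v w)"
proof -
  have "(M *\<^sub>v x) \<bullet>c w = (\<Sum>i<n. (\<Sum>k<m. M $$ (i,k) * x $ k) * cnj (w $ i))"
    using M x w by (auto simp: scalar_prod_def mult_mat_vec_def row_def lessThan_atLeast0 intro!: sum.cong)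
  also have "\<dots> = (\<Sum>i<n. \<Sum>k<m. M $$ (i,k) * x $ k * cnj (w $ i))"
    by (simp add: sum_distrib_right)
  also have "\<dots> = (\<Sum>k<m. \<Sum>i<n. M $$ (i,k) * x $ k * cnj (w $ i))"
    by (rule sum.swap)
  also have "\<dots> = (\<Sum>k<m. x $ k * cnj (\<Sum>i<n. cnj (M $$ (i,k)) * w $ i))"
    by (simp add: sum_distrib_left ac_simps)
  also have "\<dots> = x \<bullet>c (conj_transpose M *\<^sub>v w)"
    using M x w by (auto simp: scalar_prod_def mult_mat_vec_def row_def lessThan_atLeast0 intro!: sum.cong)
  finally show ?thesis .
qed

lemma mtr_comm:
  assumes A: "A \<in> carrier_mat n m" and B: "B \<in> carrier_mat m n"
  shows "mtr (A * B) = mtr (B * A)"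
proof -
  have "mtr (A * B) = (\<Sum>i<n. \<Sum>k<m. A $$ (i,k) * B $$ (k,i))"
    using A B by (auto simp: mtr_def scalar_prod_def row_def col_def lessThan_atLeast0 intro!: sum.cong)
  also have "\<dots> = (\<Sum>k<m. \<Sum>i<n. B $$ (k,i) * A $$ (i,k))"
    by (subst sum.swap) (simp add: ac_simps)
  also have "\<dots> = mtr (B * A)"
    using A B by (auto simp: mtr_def scalar_prod_def row_def col_def lessThan_atLeast0 intro!: sum.cong)
  finally show ?thesis .
qed

lemma mtr_sim:
  assumes A: "A \<in> carrier_mat n n" and B: "B \<in> carrier_mat n n"
    and P: "P \<in> carrier_mat n n" and Q: "Q \<in> carrier_mat n n"
    and QP: "Q * P = 1\<^sub>m n"
  shows "mtr (P * B * Q) = mtr B"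
proof -
  have "mtr (P * B * Q) = mtr (Q * (P * B))" using P B Q by (intro mtr_comm) auto
  also have "Q * (P * B) = (Q * P) * B" using P B Q by (simp add: assoc_mult_mat)
  also have "\<dots> = B" using QP B by simp
  finally show ?thesis .
qed

lemma mtr_upper:
  assumes B: "B \<in> carrier_mat n n" and ut: "upper_triangular B"
  shows "mtr B = sum_list (diag_mat B)"
    "mtr (B * B) = sum_list (map (\<lambda>x. x^2) (diag_mat B))"
proof -
  show "mtr B = sum_list (diag_mat B)"
    using B by (simp add: mtr_def diag_mat_def sum_list_sum_nth lessThan_atLeast0)
  have d: "(B * B) $$ (i,i) = B $$ (i,i) ^ 2" if i: "i < n" for i
  proof -
    have "(B * B) $$ (i,i) = (\<Sum>k\<in>{0..<n}. B $$ (i,k) * B $$ (k,i))"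
      using B i by (simp add: scalar_prod_def row_def col_def)
    also have "\<dots> = B $$ (i,i) * B $$ (i,i)"
    proof -
      have z: "(\<Sum>k\<in>{0..<n}-{i}. B $$ (i,k) * B $$ (k,i)) = 0"
      proof (rule sum.neutral, intro ballI)
        fix k assume k: "k \<in> {0..<n}-{i}"
        show "B $$ (i,k) * B $$ (k,i) = 0"
        proof (cases "k < i")
          case True thus ?thesis using ut B i unfolding upper_triangular_def by auto
        next
          case False hence "i < k" using k by auto
          thus ?thesis using ut B k unfolding upper_triangular_def by auto
        qed
      qed
      have "(\<Sum>k\<in>{0..<n}. B $$ (i,k) * B $$ (k,i)) = B $$ (i,i) * B $$ (i,i) + (\<Sum>k\<in>{0..<n}-{i}. B $$ (i,k) * B $$ (k,i))"
        using i by (subst sum.remove[of _ i]) auto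
      thus ?thesis using z by simp
    qed
    finally show ?thesis by (simp add: power2_eq_square)
  qed
  show "mtr (B * B) = sum_list (map (\<lambda>x. x^2) (diag_mat B))"
    using B d by (simp add: mtr_def diag_mat_def sum_list_sum_nth lessThan_atLeast0)
qed

lemma spec_complex:
  fixes A :: "complex mat"
  assumes A: "A \<in> carrier_mat n n"
  shows "\<exists>es. length es = n \<and> (\<forall>e\<in>set es. eigenvalue A e) \<and> det A = prod_list es
     \<and> mtr A = sum_list es \<and> mtr (A * A) = sum_list (map (\<lambda>x. x^2) es)"
proof -
  obtain es where cp: "char_poly A = (\<Prod>a\<leftarrow>es. [:- a, 1:])" and len: "length es = n"
    using char_poly_factorized[OF A] by blast
  obtain B P Q where sd: "schur_decomposition A es = (B,P,Q)"
    by (cases "schur_decomposition A es") auto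
  from schur_decomposition[OF A cp sd]
  have sim: "similar_mat_wit A B P Q" and ut: "upper_triangular B" and dg: "diag_mat B = es" by auto
  from sim A have Bc: "B \<in> carrier_mat n n" and Pc: "P \<in> carrier_mat n n" and Qc: "Q \<in> carrier_mat n n"
    and PQ: "P * Q = 1\<^sub>m n" and QP: "Q * P = 1\<^sub>m n" and AB: "A = P * B * Q"
    unfolding similar_mat_wit_def Let_def by auto
  have ev: "\<forall>e\<in>set es. eigenvalue A e"
  proof
    fix e assume e: "e \<in> set es"
    have "poly (char_poly A) e = 0" unfolding cp poly_prod_list
      using e by (auto simp: prod_list_zero_iff)
    thus "eigenvalue A e" using eigenvalue_root_char_poly[OF A] by simp
  qed
  have "det A = det B" using det_similar sim unfolding similar_mat_def by blast
  also have "\<dots> = prod_list es" using det_upper_triangular[OF ut Bc] dg by simp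
  finally have d: "det A = prod_list es" .
  have t1: "mtr A = sum_list es" using AB mtr_sim[OF A Bc Pc Qc QP] mtr_upper(1)[OF Bc ut] dg by simp
  have "A * A = P * (B * B) * Q"
  proof -
    have "A * A = P * B * (Q * P) * B * Q" using AB Pc Bc Qc
      by (simp add: assoc_mult_mat[of _ n n _ n _ n])
    also have "\<dots> = P * (B * B) * Q" using QP Pc Bc Qc
      by (simp add: assoc_mult_mat[of _ n n _ n _ n])
    finally show ?thesis .
  qed
  hence t2: "mtr (A * A) = sum_list (map (\<lambda>x. x^2) es)"
    using mtr_sim[OF _ _ Pc Qc QP, of "A*A" "B*B"] A Bc Pc Qc mtr_upper(2)[OF Bc ut] dg by simp
  show ?thesis using len ev d t1 t2 by blast
qed



lemma cnj_hom: "comm_ring_hom cnj"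
  by unfold_locales auto

lemma det_cnj: "A \<in> carrier_mat n n \<Longrightarrow> det (map_mat cnj A) = cnj (det A)"
  using comm_ring_hom.hom_det[OF cnj_hom] by blast

lemma ct_as_map: "conj_transpose M = map_mat cnj (transpose_mat M)"
  by (rule eq_matI) auto

lemma det_ct: "M \<in> carrier_mat n n \<Longrightarrow> det (conj_transpose M) = cnj (det M)"
  unfolding ct_as_map by (subst det_cnj[of _ n]) (auto simp: det_transpose)

lemma sprod_smult_left: fixes v w :: "complex vec"
  assumes "dim_vec w = dim_vec v"
  shows "(a \<cdot>\<^sub>v v) \<bullet>c w = a * (v \<bullet>c w)"
  using assms by (auto simp: scalar_prod_def sum_distrib_left ac_simps)

lemma sprod_smult_right: fixes v w :: "complex vec"
  assumes "dim_vec w = dim_vec v"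
  shows "v \<bullet>c (b \<cdot>\<^sub>v w) = cnj b * (v \<bullet>c w)"
  using assms by (auto simp: scalar_prod_def sum_distrib_left ac_simps)

lemma prod_cnj_list: "prod_list xs * cnj (prod_list xs) = prod_list (map (\<lambda>e. e * cnj e) (xs :: complex list))"
  by (induct xs) (auto simp: ac_simps)

lemma prod_list_const: "(\<forall>e\<in>set xs. f e = c) \<Longrightarrow> prod_list (map f xs) = c ^ length xs"
  by (induct xs) auto

lemma smult_one_mat_vec: "v \<in> carrier_vec n \<Longrightarrow> (k \<cdot>\<^sub>m 1\<^sub>m n) *\<^sub>v v = (k::complex) \<cdot>\<^sub>v v"
proof (rule eq_vecI)
  fix i assume v: "v \<in> carrier_vec n" and i: "i < dim_vec (k \<cdot>\<^sub>v v)"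
  have "(\<Sum>j = 0..<n. k * (if i = j then 1 else 0) * v $ j) = (\<Sum>j = 0..<n. if i = j then k * v $ j else 0)"
    by (rule sum.cong) auto
  also have "\<dots> = k * v $ i" using i v by (simp add: sum.delta)
  finally show "((k \<cdot>\<^sub>m 1\<^sub>m n) *\<^sub>v v) $ i = (k \<cdot>\<^sub>v v) $ i"
    using v i by (simp add: scalar_prod_def row_def)
qed (auto)

lemma fwd:
  fixes n :: nat and M :: "complex mat"
  assumes n: "n \<ge> 1" and M: "M \<in> carrier_mat n n"
    and MC: "M * conj_transpose M = of_nat n \<cdot>\<^sub>m 1\<^sub>m n"
    and ev: "eigenvalue M e"
  shows "cmod e = sqrt (real n)"
proof -
  let ?C = "conj_transpose M"
  have C: "?C \<in> carrier_mat n n" using M by simp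
  let ?C' = "(1 / of_nat n) \<cdot>\<^sub>m ?C"
  have "M * ?C' = (1 / of_nat n) \<cdot>\<^sub>m (M * ?C)" using mult_smult_distrib[OF M C] by simp
  also have "\<dots> = 1\<^sub>m n" unfolding MC using n by (intro eq_matI) auto
  finally have "?C' * M = 1\<^sub>m n" using mat_mult_left_right_inverse[OF M] C by auto
  hence "of_nat n \<cdot>\<^sub>m (?C' * M) = of_nat n \<cdot>\<^sub>m 1\<^sub>m n" by simp
  moreover have "?C' * M = (1 / of_nat n) \<cdot>\<^sub>m (?C * M)" using mult_smult_assoc_mat[OF C M] by simp
  moreover have "of_nat n \<cdot>\<^sub>m ((1 / of_nat n) \<cdot>\<^sub>m (?C * M)) = ?C * M"
    using n by (intro eq_matI) auto
  ultimately have CM: "?C * M = of_nat n \<cdot>\<^sub>m 1\<^sub>m n" by simp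
  obtain v where v: "v \<in> carrier_vec n" "v \<noteq> 0\<^sub>v n" "M *\<^sub>v v = e \<cdot>\<^sub>v v"
    using ev M unfolding eigenvalue_def eigenvector_def by auto
  have "(M *\<^sub>v v) \<bullet>c (M *\<^sub>v v) = v \<bullet>c (?C *\<^sub>v (M *\<^sub>v v))"
    using adj_sprod[OF M v(1) mult_mat_vec_carrier[OF M v(1)]] by simp
  also have "?C *\<^sub>v (M *\<^sub>v v) = (?C * M) *\<^sub>v v" by (rule assoc_mult_mat_vec[symmetric, OF C M v(1)])
  also have "\<dots> = of_nat n \<cdot>\<^sub>v v" unfolding CM using v by (simp add: smult_one_mat_vec)
  finally have "(e \<cdot>\<^sub>v v) \<bullet>c (e \<cdot>\<^sub>v v) = v \<bullet>c (of_nat n \<cdot>\<^sub>v v)" using v by simp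
  hence "e * cnj e * (v \<bullet>c v) = of_nat n * (v \<bullet>c v)"
    using v by (simp add: sprod_smult_left sprod_smult_right mult.commute)
  moreover have "v \<bullet>c v \<noteq> 0" using v by simp
  ultimately have "e * cnj e = of_nat n" by simp
  hence "complex_of_real ((cmod e)^2) = complex_of_real (real n)" by (simp only: complex_norm_square) simp
  hence "(cmod e)^2 = real n" using of_real_eq_iff by blast
  thus ?thesis by (metis norm_ge_zero real_sqrt_unique)
qed


lemma cnj_self_cmod: "z * cnj z = complex_of_real ((cmod z)^2)"
  by (simp only: complex_norm_square)

lemma bwd:
  fixes n :: nat and M :: "complex mat"
  assumes n: "n \<ge> 1" and M: "M \<in> carrier_mat n n"
    and U: "\<forall>i<n. \<forall>j<n. cmod (M $$ (i,j)) = 1"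
    and E: "\<forall>ev. eigenvalue M ev \<longrightarrow> cmod ev = sqrt (real n)"
  shows "M * conj_transpose M = of_nat n \<cdot>\<^sub>m 1\<^sub>m n"
proof -
  let ?C = "conj_transpose M"
  define A where "A = M * ?C"
  have C: "?C \<in> carrier_mat n n" using M by simp
  have A: "A \<in> carrier_mat n n" using M C unfolding A_def by simp
  have Aij: "A $$ (i,j) = (\<Sum>k<n. M $$ (i,k) * cnj (M $$ (j,k)))" if "i < n" "j < n" for i j
    using that M unfolding A_def by (auto simp: scalar_prod_def row_def col_def lessThan_atLeast0 intro!: sum.cong)
  have herm: "A $$ (j,i) = cnj (A $$ (i,j))" if "i < n" "j < n" for i j
    using that by (simp add: Aij ac_simps)
  have Adiag: "A $$ (i,i) = of_nat n" if "i < n" for i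
  proof -
    have "A $$ (i,i) = (\<Sum>k<n. complex_of_real ((cmod (M $$ (i,k)))^2))"
      using that by (simp add: Aij cnj_self_cmod)
    also have "\<dots> = (\<Sum>k<n. 1)" using U that by (intro sum.cong) auto
    finally show ?thesis by simp
  qed
  have evA: "Im mu = 0 \<and> Re mu \<ge> 0" if evmu: "eigenvalue A mu" for mu
  proof -
    obtain v where v: "v \<in> carrier_vec n" "v \<noteq> 0\<^sub>v n" "A *\<^sub>v v = mu \<cdot>\<^sub>v v"
      using evmu A unfolding eigenvalue_def eigenvector_def by auto
    have Cv: "?C *\<^sub>v v \<in> carrier_vec n" using C v by simp
    have "(A *\<^sub>v v) \<bullet>c v = (M *\<^sub>v (?C *\<^sub>v v)) \<bullet>c v"
      unfolding A_def using assoc_mult_mat_vec[OF M C v(1)] by simp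
    also have "\<dots> = (?C *\<^sub>v v) \<bullet>c (?C *\<^sub>v v)" by (rule adj_sprod[OF M Cv v(1)])
    finally have eq: "mu * (v \<bullet>c v) = (?C *\<^sub>v v) \<bullet>c (?C *\<^sub>v v)"
      using v by (simp add: sprod_smult_left)
    define s where "s = v \<bullet>c v"
    define t where "t = (?C *\<^sub>v v) \<bullet>c (?C *\<^sub>v v)"
    have s: "s > 0" unfolding s_def using v by simp
    have t: "t \<ge> 0" unfolding t_def by blast
    have eq': "mu * s = t" using eq unfolding s_def t_def .
    from s have s1: "Im s = 0" "Re s > 0" by (auto simp: less_complex_def)
    from t have t1: "Im t = 0" "Re t \<ge> 0" by (auto simp: less_eq_complex_def)
    have "Re (mu * s) = Re t" "Im (mu * s) = Im t" using eq' by auto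
    hence r: "Re mu * Re s = Re t" and i: "Im mu * Re s = 0" using s1 t1 by auto
    have "Im mu = 0" using i s1 by simp
    moreover have "Re mu \<ge> 0" using r s1 t1 by (metis zero_le_mult_iff not_less)
    ultimately show ?thesis by simp
  qed
  obtain esM where esM: "length esM = n" "\<forall>e\<in>set esM. eigenvalue M e" "det M = prod_list esM"
    using spec_complex[OF M] by blast
  have "det M * cnj (det M) = prod_list (map (\<lambda>e. e * cnj e) esM)"
    using esM(3) prod_cnj_list by simp
  also have "\<dots> = of_nat n ^ n"
  proof -
    have "\<forall>e\<in>set esM. e * cnj e = of_nat n"
    proof
      fix e assume "e \<in> set esM"
      hence "cmod e = sqrt (real n)" using esM(2) E by blast
      thus "e * cnj e = of_nat n" by (simp add: cnj_self_cmod)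
    qed
    thus ?thesis using prod_list_const esM(1) by metis
  qed
  finally have detM: "det M * cnj (det M) = of_nat n ^ n" .
  have detA: "det A = of_nat n ^ n"
    unfolding A_def using det_mult[OF M C] det_ct[OF M] detM by simp
  obtain es where es: "length es = n" "\<forall>e\<in>set es. eigenvalue A e" "det A = prod_list es"
    "mtr A = sum_list es" "mtr (A * A) = sum_list (map (\<lambda>x. x^2) es)"
    using spec_complex[OF A] by blast
  define r where "r i = Re (es ! i)" for i
  have esr: "es ! i = complex_of_real (r i)" and rnn: "r i \<ge> 0" if "i < n" for i
  proof -
    have "eigenvalue A (es ! i)" using es(1,2) that by simp
    from evA[OF this] show "es ! i = complex_of_real (r i)" "r i \<ge> 0"
      unfolding r_def by (auto simp: complex_eq_iff)
  qed
  have "mtr A = (\<Sum>i<n. of_nat n)" using A Adiag by (simp add: mtr_def)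
  hence "complex_of_real (\<Sum>i<n. r i) = complex_of_real (real n * real n)"
    using es(1,4) esr by (simp add: sum_list_sum_nth lessThan_atLeast0)
  hence sr: "(\<Sum>i<n. r i) = real n * real n" using of_real_eq_iff by blast
  have "complex_of_real (\<Prod>i<n. r i) = complex_of_real (real n ^ n)"
    using es(1,3) esr detA by (simp add: prod.list_conv_set_nth lessThan_atLeast0)
  hence pr: "(\<Prod>i<n. r i) = real n ^ n" using of_real_eq_iff by blast
  have rn: "r i = real n" if "i < n" for i
    using amgm_eq[of "real n" n r, OF _ rnn sr pr that] n by simp
  have "mtr (A * A) = (\<Sum>i<n. (of_nat n)^2)"
    using es(1,5) esr rn by (simp add: sum_list_sum_nth lessThan_atLeast0)
  hence tr2: "mtr (A * A) = of_nat n ^ 3" by (simp add: power2_eq_square power3_eq_cube)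
  have "mtr (A * A) = (\<Sum>i<n. \<Sum>k<n. A $$ (i,k) * A $$ (k,i))"
    using A by (auto simp: mtr_def scalar_prod_def row_def col_def lessThan_atLeast0 intro!: sum.cong)
  also have "\<dots> = (\<Sum>i<n. \<Sum>k<n. complex_of_real ((cmod (A $$ (i,k)))^2))"
  proof (intro sum.cong refl)
    fix i k assume ik: "i \<in> {..<n}" "k \<in> {..<n}"
    have "A $$ (k,i) = cnj (A $$ (i,k))" using herm[of i k] ik by blast
    thus "A $$ (i,k) * A $$ (k,i) = complex_of_real ((cmod (A $$ (i,k)))^2)"
      by (simp add: cnj_self_cmod)
  qed
  finally have "complex_of_real (\<Sum>i<n. \<Sum>k<n. (cmod (A $$ (i,k)))^2) = complex_of_real (real n ^ 3)"
    using tr2 by simp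
  hence S: "(\<Sum>i<n. \<Sum>k<n. (cmod (A $$ (i,k)))^2) = real n ^ 3" using of_real_eq_iff by blast
  have split: "(\<Sum>k<n. (cmod (A $$ (i,k)))^2) = real n ^ 2 + (\<Sum>k\<in>{..<n}-{i}. (cmod (A $$ (i,k)))^2)"
    if i: "i < n" for i
    using i Adiag[OF i] by (subst sum.remove[of _ i]) auto
  have "(\<Sum>i<n. \<Sum>k<n. (cmod (A $$ (i,k)))^2) = real n ^ 3 + (\<Sum>i<n. \<Sum>k\<in>{..<n}-{i}. (cmod (A $$ (i,k)))^2)"
    using split by (simp add: sum.distrib power2_eq_square power3_eq_cube)
  hence Z: "(\<Sum>i<n. \<Sum>k\<in>{..<n}-{i}. (cmod (A $$ (i,k)))^2) = 0" using S by simp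
  have off: "A $$ (i,k) = 0" if "i < n" "k < n" "i \<noteq> k" for i k
  proof -
    have "(\<Sum>k\<in>{..<n}-{i}. (cmod (A $$ (i,k)))^2) = 0"
      using Z sum_nonneg_eq_0_iff[of "{..<n}" "\<lambda>i. \<Sum>k\<in>{..<n}-{i}. (cmod (A $$ (i,k)))^2"] that
      by (simp add: sum_nonneg)
    hence "(cmod (A $$ (i,k)))^2 = 0"
      using sum_nonneg_eq_0_iff[of "{..<n}-{i}" "\<lambda>k. (cmod (A $$ (i,k)))^2"] that by simp
    thus ?thesis by simp
  qed
  have "A = of_nat n \<cdot>\<^sub>m 1\<^sub>m n"
    by (rule eq_matI) (use A Adiag off in auto)
  thus ?thesis unfolding A_def .
qed


theorem lemma2p2:
  fixes n :: nat and M :: "complex mat"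
  assumes "n \<ge> 1" and "M \<in> carrier_mat n n"
  shows "complex_hadamard n M \<longleftrightarrow>
    ((\<forall>i<n. \<forall>j<n. cmod (M $$ (i,j)) = 1) \<and>
     (\<forall>ev. eigenvalue M ev \<longrightarrow> cmod ev = sqrt (real n)))"
proof
  assume H: "complex_hadamard n M"
  hence U: "\<forall>i<n. \<forall>j<n. cmod (M $$ (i,j)) = 1"
    and MC: "M * conj_transpose M = of_nat n \<cdot>\<^sub>m 1\<^sub>m n"
    unfolding complex_hadamard_def by auto
  show "(\<forall>i<n. \<forall>j<n. cmod (M $$ (i,j)) = 1) \<and>
     (\<forall>ev. eigenvalue M ev \<longrightarrow> cmod ev = sqrt (real n))"
    using U fwd[OF assms MC] by blast
next
  assume R: "(\<forall>i<n. \<forall>j<n. cmod (M $$ (i,j)) = 1) \<and>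
     (\<forall>ev. eigenvalue M ev \<longrightarrow> cmod ev = sqrt (real n))"
  show "complex_hadamard n M"
    unfolding complex_hadamard_def using assms(2) R bwd[OF assms] by blast
qed

end
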